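(* Let $\Omega,\mathcal{L},\mathbb{G}$ be as in the context, assume (A1), (A2) and that $\mathbb{G}$ satisfies (K1). Let $\kappa_0>0$ and let $u\in L^2(\Omega)$ be nonnegative with $u(x_0)\le\kappa_0\int_\Omega u(x)\mathbb{G}(x,x_0)\,dx$ for a.e. $x_0\in\Omega$. Then there exists a constant $\overline{\kappa}>0$ such that $\|u\|_{L^\infty(\Omega)}\le\overline{\kappa}\|u\|_{L^1(\Omega)}$.
   Context: Let $N\ge2$, $\Omega\subset\mathbb{R}^N$ a bounded domain with $C^{1,1}$ boundary. $\mathcal{L}:\mathrm{dom}(\mathcal{L})\subseteq L^1(\Omega)\to L^1(\Omega)$ is densely defined, linear (Dirichlet conditions built in), with (A1) $\mathcal{L}$ is $m$-accretive on $L^1(\Omega)$ and (A2) if $0\le g\le1$ then $0\le e^{-t\mathcal{L}}g\le1$ for all $t>0$. It has a left inverse $\mathcal{L}^{-1}[g](x)=\int_\Omega\mathbb{G}(x,y)g(y)dy$ on $L^1(\Omega)$. (K1): for some $s\in(0,1]$, $c_1>0$, $0\le\mathbb{G}(x,y)\le c_1|x-y|^{-(N-2s)}$ for a.e. $x,y\in\Omega$. *)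

theory Defs
  imports "HOL-Analysis.Analysis"
begin

text \<open>Functions on Omega are represented by real-valued functions on the ambient
  Euclidean space; L^1 classes are handled by working modulo a.e. equality
  with respect to Lebesgue measure restricted to Omega.\<close>

definition L1 :: "'a::euclidean_space set \<Rightarrow> ('a \<Rightarrow> real) set" where
  "L1 \<Omega> = {f. integrable (lebesgue_on \<Omega>) f}"

definition L1norm :: "'a::euclidean_space set \<Rightarrow> ('a \<Rightarrow> real) \<Rightarrow> real" where
  "L1norm \<Omega> f = (\<integral>x. \<bar>f x\<bar> \<partial>lebesgue_on \<Omega>)"

definition ae_eq :: "'a::euclidean_space set \<Rightarrow> ('a \<Rightarrow> real) \<Rightarrow> ('a \<Rightarrow> real) \<Rightarrow> bool" where
  "ae_eq \<Omega> f g \<longleftrightarrow> (AE x in lebesgue_on \<Omega>. f x = g x)"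

definition C11_boundary :: "'a::euclidean_space set \<Rightarrow> bool" where
  "C11_boundary \<Omega> \<longleftrightarrow>
     (\<forall>z\<in>frontier \<Omega>. \<exists>r>0. \<exists>(\<rho>::'a \<Rightarrow> real) (d\<rho>::'a \<Rightarrow> 'a) (K::real).
        (\<forall>x\<in>ball z r. (\<rho> has_derivative (\<lambda>h. d\<rho> x \<bullet> h)) (at x)) \<and>
        (\<forall>x\<in>ball z r. \<forall>y\<in>ball z r. norm (d\<rho> x - d\<rho> y) \<le> K * dist x y) \<and>
        d\<rho> z \<noteq> 0 \<and>
        \<Omega> \<inter> ball z r = {x\<in>ball z r. \<rho> x < 0})"

definition bounded_C11_domain :: "'a::euclidean_space set \<Rightarrow> bool" where
  "bounded_C11_domain \<Omega> \<longleftrightarrow> open \<Omega> \<and> connected \<Omega> \<and> \<Omega> \<noteq> {} \<and> bounded \<Omega> \<and> C11_boundary \<Omega>"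

definition l1_linear_operator ::
  "'a::euclidean_space set \<Rightarrow> ('a \<Rightarrow> real) set \<Rightarrow> (('a \<Rightarrow> real) \<Rightarrow> ('a \<Rightarrow> real)) \<Rightarrow> bool" where
  "l1_linear_operator \<Omega> D L \<longleftrightarrow>
     D \<subseteq> L1 \<Omega> \<and> (\<forall>f\<in>D. L f \<in> L1 \<Omega>) \<and>
     (\<forall>f\<in>D. \<forall>g. ae_eq \<Omega> f g \<longrightarrow> g \<in> D \<and> ae_eq \<Omega> (L f) (L g)) \<and>
     (\<forall>f\<in>D. \<forall>g\<in>D. \<forall>a b::real. (\<lambda>x. a * f x + b * g x) \<in> D \<and>
        ae_eq \<Omega> (L (\<lambda>x. a * f x + b * g x)) (\<lambda>x. a * L f x + b * L g x))"

definition densely_defined ::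
  "'a::euclidean_space set \<Rightarrow> ('a \<Rightarrow> real) set \<Rightarrow> bool" where
  "densely_defined \<Omega> D \<longleftrightarrow>
     (\<forall>f\<in>L1 \<Omega>. \<forall>e>0. \<exists>g\<in>D. L1norm \<Omega> (\<lambda>x. f x - g x) < e)"

definition m_accretive_L1 ::
  "'a::euclidean_space set \<Rightarrow> ('a \<Rightarrow> real) set \<Rightarrow> (('a \<Rightarrow> real) \<Rightarrow> ('a \<Rightarrow> real)) \<Rightarrow> bool" where
  "m_accretive_L1 \<Omega> D L \<longleftrightarrow>
     (\<forall>f\<in>D. \<forall>lam>0. L1norm \<Omega> f \<le> L1norm \<Omega> (\<lambda>x. f x + lam * L f x)) \<and>
     (\<forall>lam>0. \<forall>g\<in>L1 \<Omega>. \<exists>f\<in>D. ae_eq \<Omega> (\<lambda>x. f x + lam * L f x) g)"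

text \<open>Resolvent (I + lambda L)^{-1} (unique up to a.e. equality by accretivity).\<close>
definition resolvent ::
  "'a::euclidean_space set \<Rightarrow> ('a \<Rightarrow> real) set \<Rightarrow> (('a \<Rightarrow> real) \<Rightarrow> ('a \<Rightarrow> real))
     \<Rightarrow> real \<Rightarrow> ('a \<Rightarrow> real) \<Rightarrow> ('a \<Rightarrow> real)" where
  "resolvent \<Omega> D L lam g = (SOME f. f \<in> D \<and> ae_eq \<Omega> (\<lambda>x. f x + lam * L f x) g)"

text \<open>h is (a representative of) e^{-tL} g, defined by the exponential formula
  e^{-tL} g = L^1-lim_n (I + (t/n) L)^{-n} g  (Crandall--Liggett).\<close>
definition semigroup_value ::
  "'a::euclidean_space set \<Rightarrow> ('a \<Rightarrow> real) set \<Rightarrow> (('a \<Rightarrow> real) \<Rightarrow> ('a \<Rightarrow> real))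
     \<Rightarrow> real \<Rightarrow> ('a \<Rightarrow> real) \<Rightarrow> ('a \<Rightarrow> real) \<Rightarrow> bool" where
  "semigroup_value \<Omega> D L t g h \<longleftrightarrow> h \<in> L1 \<Omega> \<and>
     (\<lambda>n. L1norm \<Omega> (\<lambda>x. ((resolvent \<Omega> D L (t / real (Suc n))) ^^ (Suc n)) g x - h x))
       \<longlonglongrightarrow> 0"

definition submarkovian ::
  "'a::euclidean_space set \<Rightarrow> ('a \<Rightarrow> real) set \<Rightarrow> (('a \<Rightarrow> real) \<Rightarrow> ('a \<Rightarrow> real)) \<Rightarrow> bool" where
  "submarkovian \<Omega> D L \<longleftrightarrow>
     (\<forall>g\<in>L1 \<Omega>. (AE x in lebesgue_on \<Omega>. 0 \<le> g x \<and> g x \<le> 1) \<longrightarrow>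
        (\<forall>t>0. \<forall>h. semigroup_value \<Omega> D L t g h \<longrightarrow>
           (AE x in lebesgue_on \<Omega>. 0 \<le> h x \<and> h x \<le> 1)))"

definition green_left_inverse ::
  "'a::euclidean_space set \<Rightarrow> ('a \<Rightarrow> real) set \<Rightarrow> (('a \<Rightarrow> real) \<Rightarrow> ('a \<Rightarrow> real))
     \<Rightarrow> ('a \<Rightarrow> 'a \<Rightarrow> real) \<Rightarrow> bool" where
  "green_left_inverse \<Omega> D L G \<longleftrightarrow>
     (\<lambda>p. G (fst p) (snd p)) \<in> borel_measurable (lebesgue_on (\<Omega> \<times> \<Omega>)) \<and>
     (\<forall>g\<in>L1 \<Omega>. AE x in lebesgue_on \<Omega>. integrable (lebesgue_on \<Omega>) (\<lambda>y. G x y * g y)) \<and>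
     (\<forall>f\<in>D. AE x in lebesgue_on \<Omega>. f x = (\<integral>y. G x y * L f y \<partial>lebesgue_on \<Omega>))"

definition K1 :: "'a::euclidean_space set \<Rightarrow> ('a \<Rightarrow> 'a \<Rightarrow> real) \<Rightarrow> real \<Rightarrow> real \<Rightarrow> bool" where
  "K1 \<Omega> G s c1 \<longleftrightarrow>
     (AE p in lebesgue_on (\<Omega> \<times> \<Omega>). 0 \<le> G (fst p) (snd p) \<and>
        G (fst p) (snd p) \<le> c1 * dist (fst p) (snd p) powr (- (real DIM('a) - 2 * s)))"

end

theory Submission
  imports Defs
begin

lemma dyadic_down:
  fixes t r :: real assumes "0 < t" "t \<le> r"
  shows "\<exists>k::nat. r / 2^(k+1) < t \<and> t \<le> r / 2^k"
proof -
  have ex: "\<exists>m::nat. r / 2^m < t"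
  proof -
    obtain m::nat where "r / t < 2^m" using real_arch_pow[of 2 "r/t"] by auto
    then have "r < t * 2^m" using assms by (simp add: divide_less_eq mult.commute)
    then show ?thesis by (intro exI[of _ m]) (simp add: divide_less_eq mult.commute)
  qed
  define m where "m = (LEAST m::nat. r / 2^m < t)"
  have m1: "r / 2^m < t" unfolding m_def by (rule LeastI_ex[OF ex])
  have "m \<noteq> 0" using m1 assms by (cases m) auto
  then obtain k where k: "m = Suc k" by (cases m) auto
  have "\<not> r / 2^k < t" using not_less_Least[of k "\<lambda>m. r / 2^m < t"] k unfolding m_def by auto
  then show ?thesis using m1 k by (intro exI[of _ k]) auto
qed

lemma dyadic_up:
  fixes t r :: real assumes "0 < r" "r \<le> t"
  shows "\<exists>k::nat. r * 2^k \<le> t \<and> t < r * 2^(k+1)"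
proof -
  have ex: "\<exists>m::nat. t < r * 2^m"
  proof -
    obtain m::nat where "t / r < 2^m" using real_arch_pow[of 2 "t/r"] by auto
    then show ?thesis using assms by (intro exI[of _ m]) (simp add: divide_less_eq mult.commute)
  qed
  define m where "m = (LEAST m::nat. t < r * 2^m)"
  have m1: "t < r * 2^m" unfolding m_def by (rule LeastI_ex[OF ex])
  have "m \<noteq> 0" using m1 assms by (cases m) auto
  then obtain k where k: "m = Suc k" by (cases m) auto
  have "\<not> t < r * 2^k" using not_less_Least[of k "\<lambda>m. t < r * 2^m"] k unfolding m_def by auto
  then show ?thesis using m1 k by (intro exI[of _ k]) auto
qed

lemma ennreal_le_suminf_term: "(f::nat \<Rightarrow> ennreal) k \<le> (\<Sum>i. f i)"
  using sum_le_suminf[OF summableI, of "{k}" f] by simp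

lemma ak_eq:
  fixes r p V :: real and k n :: nat
  assumes "r > 0"
  shows "(r / 2^(k+1)) powr (-p) * (V * (r / 2^k) ^ n) = V * 2 powr p * r powr (real n - p) * (2 powr (p - real n)) ^ k"
proof -
  have e1: "(r / 2^(k+1)) powr (-p) = r powr (-p) * 2 powr ((real k + 1) * p)"
  proof -
    have h: "(2::real)^(k+1) = 2 powr (real k + 1)"
      by (subst powr_realpow[symmetric]) (auto simp: add.commute)
    have "(r / 2^(k+1)) powr (-p) = (r / 2 powr (real k + 1)) powr (-p)"
      by (simp only: h)
    also have "\<dots> = r powr (-p) / (2 powr (real k + 1)) powr (-p)"
      using assms by (auto intro: powr_divide)
    also have "\<dots> = r powr (-p) / 2 powr (-((real k + 1) * p))"
      by (simp only: powr_powr mult_minus_right)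
    also have "\<dots> = r powr (-p) * 2 powr ((real k + 1) * p)"
      by (simp only: powr_minus inverse_inverse_eq divide_inverse)
    finally show ?thesis .
  qed
  have e2: "(r / 2^k) ^ n = r powr real n * 2 powr (- (real k * real n))"
  proof -
    have h: "(2::real)^k = 2 powr real k"
      by (subst powr_realpow[symmetric]) auto
    have "(r / 2^k) ^ n = (r / 2^k) powr real n"
      using assms by (simp add: powr_realpow)
    also have "\<dots> = (r / 2 powr real k) powr real n"
      by (simp only: h)
    also have "\<dots> = r powr real n / (2 powr real k) powr real n"
      using assms by (auto intro: powr_divide)
    also have "\<dots> = r powr real n / 2 powr (real k * real n)"
      by (simp only: powr_powr)
    also have "\<dots> = r powr real n * 2 powr (- (real k * real n))"
      by (simp only: powr_minus divide_inverse)
    finally show ?thesis .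
  qed
  have e3: "(2 powr (p - real n)) ^ k = 2 powr ((p - real n) * real k)"
  proof -
    have "(2 powr (p - real n)) ^ k = (2 powr (p - real n)) powr real k"
      by (rule powr_realpow[symmetric]) simp
    then show ?thesis by (simp only: powr_powr)
  qed
  have e4: "r powr (real n - p) = r powr real n * r powr (-p)"
    by (simp only: powr_add[symmetric]) simp
  have e5: "2 powr ((real k + 1) * p) * 2 powr (- (real k * real n)) = 2 powr p * 2 powr ((p - real n) * real k)"
  proof -
    have a: "(real k + 1) * p + (- (real k * real n)) = p + (p - real n) * real k"
      by (simp add: algebra_simps)
    show ?thesis by (simp only: powr_add[symmetric] a)
  qed
  have "r powr (-p) * 2 powr ((real k + 1) * p) * (V * (r powr real n * 2 powr (- (real k * real n))))
     = V * 2 powr p * (r powr real n * r powr - p) * 2 powr ((p - real n) * real k)"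
  proof -
    have "V * 2 powr p * (r powr real n * r powr - p) * 2 powr ((p - real n) * real k)
      = V * (r powr (-p) * r powr real n) * (2 powr p * 2 powr ((p - real n) * real k))"
      by (simp only: mult_ac)
    also have "\<dots> = V * (r powr (-p) * r powr real n) * (2 powr ((real k + 1) * p) * 2 powr (- (real k * real n)))"
      by (simp only: e5[symmetric])
    also have "\<dots> = r powr (-p) * 2 powr ((real k + 1) * p) * (V * (r powr real n * 2 powr (- (real k * real n))))"
      by (simp only: mult_ac)
    finally show ?thesis by (rule sym)
  qed
  then show ?thesis by (simp only: e1 e2 e3 e4)
qed

lemma cball_borel[measurable]: "cball (c::'a::euclidean_space) r \<in> sets borel"
  by simp

lemma ball_int:
  fixes c :: "'a::euclidean_space" and p r :: real
  assumes p0: "0 \<le> p" and pN: "p < DIM('a)" and r0: "r > 0"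
  shows "(\<integral>\<^sup>+x. indicator (cball c r) x * ennreal (norm (x - c) powr (-p)) \<partial>lborel)
     \<le> ennreal (unit_ball_vol DIM('a) * 2 powr p * r powr (real DIM('a) - p) / (1 - 2 powr (p - real DIM('a))))"
proof -
  define n where "n = DIM('a)"
  define V where "V = unit_ball_vol (real n)"
  define q where "q = 2 powr (p - real n)"
  have V0: "V \<ge> 0" unfolding V_def by (rule unit_ball_vol_nonneg) simp
  have q0: "0 < q" "q < 1"
  proof -
    show "0 < q" unfolding q_def by simp
    have "2 powr (p - real n) < 2 powr 0" using pN unfolding n_def by (intro powr_less_mono) auto
    then show "q < 1" unfolding q_def by simp
  qed
  define g where "g k x = indicator (cball c (r / 2^k)) x * ennreal ((r / 2^(k+1)) powr (-p))" for k x
  have pw: "indicator (cball c r) x * ennreal (norm (x - c) powr (-p)) \<le> (\<Sum>k. g k x)" for x :: 'a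
  proof (cases "x \<in> cball c r \<and> x \<noteq> c")
    case True
    define t where "t = norm (x - c)"
    have t: "0 < t" "t \<le> r" using True by (auto simp: t_def dist_norm norm_minus_commute)
    obtain k where k: "r / 2^(k+1) < t" "t \<le> r / 2^k" using dyadic_down[OF t] by blast
    have "x \<in> cball c (r / 2^k)" using k by (simp add: t_def dist_norm norm_minus_commute)
    moreover have "t powr (-p) \<le> (r / 2^(k+1)) powr (-p)"
      using k p0 r0 by (intro powr_mono2') auto
    ultimately have "indicator (cball c r) x * ennreal (norm (x - c) powr (-p)) \<le> g k x"
      using True unfolding g_def t_def by (simp add: ennreal_leI)
    also have "\<dots> \<le> (\<Sum>k. g k x)" by (rule ennreal_le_suminf_term)
    finally show ?thesis .
  next
    case False
    then show ?thesis by (auto simp: indicator_def)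
  qed
  have "(\<integral>\<^sup>+x. indicator (cball c r) x * ennreal (norm (x - c) powr (-p)) \<partial>lborel)
      \<le> (\<integral>\<^sup>+x. (\<Sum>k. g k x) \<partial>lborel)"
    by (intro nn_integral_mono pw)
  also have "\<dots> = (\<Sum>k. integral\<^sup>N lborel (g k))"
    by (rule nn_integral_suminf) (unfold g_def, measurable)
  also have "\<dots> = (\<Sum>k. ennreal (V * 2 powr p * r powr (real n - p) * q ^ k))"
  proof (intro suminf_cong)
    fix k
    have "integral\<^sup>N lborel (g k) = ennreal ((r / 2^(k+1)) powr (-p)) * emeasure lborel (cball c (r / 2^k))"
      unfolding g_def by (subst mult.commute) (simp add: nn_integral_cmult_indicator)
    also have "\<dots> = ennreal ((r / 2^(k+1)) powr (-p) * (V * (r / 2^k) ^ n))"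
      using r0 V0 by (simp add: emeasure_cball V_def n_def ennreal_mult')
    also have "\<dots> = ennreal (V * 2 powr p * r powr (real n - p) * q ^ k)"
      unfolding q_def by (simp only: ak_eq[OF r0])
    finally show "integral\<^sup>N lborel (g k) = ennreal (V * 2 powr p * r powr (real n - p) * q ^ k)" .
  qed
  also have "\<dots> = ennreal (\<Sum>k. V * 2 powr p * r powr (real n - p) * q ^ k)"
    using q0 V0 by (intro suminf_ennreal2) (auto intro!: summable_mult summable_geometric)
  also have "(\<Sum>k. V * 2 powr p * r powr (real n - p) * q ^ k) = V * 2 powr p * r powr (real n - p) / (1 - q)"
    using q0 by (simp add: suminf_mult suminf_geometric divide_inverse)
  finally show ?thesis unfolding V_def q_def n_def .
qed

lemma bk_eq:
  fixes r p V :: real and k n :: nat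
  assumes "r > 0"
  shows "(r * 2^k) powr (-p) * (V * (r * 2^(k+1)) ^ n) = V * 2^n * r powr (real n - p) * (2 powr (real n - p)) ^ k"
proof -
  have h: "(2::real)^k = 2 powr real k"
    by (subst powr_realpow[symmetric]) auto
  have e1: "(r * 2^k) powr (-p) = r powr (-p) * 2 powr (- (real k * p))"
  proof -
    have "(r * 2^k) powr (-p) = (r * 2 powr real k) powr (-p)" by (simp only: h)
    also have "\<dots> = r powr (-p) * (2 powr real k) powr (-p)"
      using assms by (auto intro: powr_mult)
    also have "\<dots> = r powr (-p) * 2 powr (- (real k * p))"
      by (simp only: powr_powr mult_minus_right)
    finally show ?thesis .
  qed
  have e2: "(r * 2^(k+1)) ^ n = r powr real n * 2^n * 2 powr (real k * real n)"
  proof -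
    have "(r * 2^(k+1)) ^ n = r ^ n * 2 ^ n * (2 ^ k) ^ n"
      by (simp add: power_mult_distrib)
    also have "r ^ n = r powr real n" using assms by (simp add: powr_realpow)
    also have "((2::real) ^ k) ^ n = 2 powr (real k * real n)"
    proof -
      have "((2::real) ^ k) ^ n = (2 powr real k) powr real n"
        by (simp only: h) (rule powr_realpow[symmetric], simp)
      then show ?thesis by (simp only: powr_powr)
    qed
    finally show ?thesis .
  qed
  have e3: "(2 powr (real n - p)) ^ k = 2 powr ((real n - p) * real k)"
  proof -
    have "(2 powr (real n - p)) ^ k = (2 powr (real n - p)) powr real k"
      by (rule powr_realpow[symmetric]) simp
    then show ?thesis by (simp only: powr_powr)
  qed
  have e4: "r powr (real n - p) = r powr real n * r powr (-p)"
    by (simp only: powr_add[symmetric]) simp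
  have e5: "2 powr (- (real k * p)) * 2 powr (real k * real n) = 2 powr ((real n - p) * real k)"
  proof -
    have a: "(- (real k * p)) + real k * real n = (real n - p) * real k"
      by (simp add: algebra_simps)
    show ?thesis by (simp only: powr_add[symmetric] a)
  qed
  have "r powr (-p) * 2 powr (- (real k * p)) * (V * (r powr real n * 2^n * 2 powr (real k * real n)))
     = V * 2^n * (r powr real n * r powr (-p)) * 2 powr ((real n - p) * real k)"
  proof -
    have "r powr (-p) * 2 powr (- (real k * p)) * (V * (r powr real n * 2^n * 2 powr (real k * real n)))
       = V * 2^n * (r powr real n * r powr (-p)) * (2 powr (- (real k * p)) * 2 powr (real k * real n))"
      by (simp only: mult_ac)
    also have "\<dots> = V * 2^n * (r powr real n * r powr (-p)) * 2 powr ((real n - p) * real k)"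
      by (simp only: e5)
    finally show ?thesis .
  qed
  then show ?thesis by (simp only: e1 e2 e3 e4)
qed

lemma outer_int:
  fixes c :: "'a::euclidean_space" and p r :: real
  assumes pN: "p > DIM('a)" and r0: "r > 0"
  shows "(\<integral>\<^sup>+x. indicator {x. r \<le> norm (x - c)} x * ennreal (norm (x - c) powr (-p)) \<partial>lborel)
     \<le> ennreal (unit_ball_vol DIM('a) * 2 ^ DIM('a) * r powr (real DIM('a) - p) / (1 - 2 powr (real DIM('a) - p)))"
proof -
  define n where "n = DIM('a)"
  define V where "V = unit_ball_vol (real n)"
  define q where "q = 2 powr (real n - p)"
  have V0: "V \<ge> 0" unfolding V_def by (rule unit_ball_vol_nonneg) simp
  have q0: "0 < q" "q < 1"
  proof -
    show "0 < q" unfolding q_def by simp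
    have "2 powr (real n - p) < 2 powr 0" using pN unfolding n_def by (intro powr_less_mono) auto
    then show "q < 1" unfolding q_def by simp
  qed
  define g where "g k x = indicator (cball c (r * 2^(k+1))) x * ennreal ((r * 2^k) powr (-p))" for k x
  have pw: "indicator {x. r \<le> norm (x - c)} x * ennreal (norm (x - c) powr (-p)) \<le> (\<Sum>k. g k x)" for x :: 'a
  proof (cases "r \<le> norm (x - c)")
    case True
    define t where "t = norm (x - c)"
    have t: "0 < r" "r \<le> t" using True r0 by (auto simp: t_def)
    obtain k where k: "r * 2^k \<le> t" "t < r * 2^(k+1)" using dyadic_up[OF t] by blast
    have "x \<in> cball c (r * 2^(k+1))" using k by (simp add: t_def dist_norm norm_minus_commute)
    moreover have "t powr (-p) \<le> (r * 2^k) powr (-p)"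
      using k pN r0 by (intro powr_mono2') auto
    ultimately have "indicator {x. r \<le> norm (x - c)} x * ennreal (norm (x - c) powr (-p)) \<le> g k x"
      using True unfolding g_def t_def by (simp add: ennreal_leI)
    also have "\<dots> \<le> (\<Sum>k. g k x)" by (rule ennreal_le_suminf_term)
    finally show ?thesis .
  next
    case False
    then show ?thesis by (auto simp: indicator_def)
  qed
  have "(\<integral>\<^sup>+x. indicator {x. r \<le> norm (x - c)} x * ennreal (norm (x - c) powr (-p)) \<partial>lborel)
      \<le> (\<integral>\<^sup>+x. (\<Sum>k. g k x) \<partial>lborel)"
    by (intro nn_integral_mono pw)
  also have "\<dots> = (\<Sum>k. integral\<^sup>N lborel (g k))"
    by (rule nn_integral_suminf) (unfold g_def, measurable)
  also have "\<dots> = (\<Sum>k. ennreal (V * 2^n * r powr (real n - p) * q ^ k))"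
  proof (intro suminf_cong)
    fix k
    have "integral\<^sup>N lborel (g k) = ennreal ((r * 2^k) powr (-p)) * emeasure lborel (cball c (r * 2^(k+1)))"
      unfolding g_def by (subst mult.commute) (simp add: nn_integral_cmult_indicator)
    also have "\<dots> = ennreal ((r * 2^k) powr (-p) * (V * (r * 2^(k+1)) ^ n))"
      using r0 V0 by (simp add: emeasure_cball V_def n_def ennreal_mult')
    also have "\<dots> = ennreal (V * 2^n * r powr (real n - p) * q ^ k)"
      unfolding q_def by (simp only: bk_eq[OF r0])
    finally show "integral\<^sup>N lborel (g k) = ennreal (V * 2^n * r powr (real n - p) * q ^ k)" .
  qed
  also have "\<dots> = ennreal (\<Sum>k. V * 2^n * r powr (real n - p) * q ^ k)"
    using q0 V0 by (intro suminf_ennreal2) (auto intro!: summable_mult summable_geometric)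
  also have "(\<Sum>k. V * 2^n * r powr (real n - p) * q ^ k) = V * 2^n * r powr (real n - p) / (1 - q)"
    using q0 by (simp add: suminf_mult suminf_geometric divide_inverse)
  finally show ?thesis unfolding V_def q_def n_def .
qed

lemma pw_bound:
  fixes x x0 y :: "'a::euclidean_space" and a D :: real
  assumes a0: "0 \<le> a" and yx0: "y \<noteq> x0"
  defines "h \<equiv> norm (y - x0) / 2"
  shows "indicator (cball x0 D) x * (norm (y - x) powr (-a) * norm (x - x0) powr (-a))
    \<le> h powr (-a) * (indicator (cball x0 h) x * norm (x - x0) powr (-a))
     + h powr (-a) * (indicator (cball y h) x * norm (x - y) powr (-a))
     + 3 powr a * (indicator {x. h \<le> norm (x - x0)} x * indicator (cball x0 D) x * norm (x - x0) powr (-(2*a)))"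
    (is "?L \<le> ?A + ?B + ?C")
proof -
  define s where "s = norm (x - x0)"
  define t where "t = norm (y - x)"
  have h0: "h > 0" using yx0 unfolding h_def by simp
  have tri: "2 * h \<le> s + t" unfolding h_def s_def t_def
    using norm_triangle_ineq[of "y - x" "x - x0"] by (simp add: add.commute)
  have tri2: "s \<le> t + 2 * h" unfolding h_def s_def t_def
    using norm_triangle_ineq[of "x - y" "y - x0"] by (simp add: norm_minus_commute)
  have A0: "?A \<ge> 0" and B0: "?B \<ge> 0" and C0: "?C \<ge> 0" by auto
  have ind01: "(0::real) \<le> indicator (cball x0 D) x" "indicator (cball x0 D) x \<le> (1::real)"
    by (auto simp: indicator_def)
  have L1: "?L \<le> t powr (-a) * s powr (-a)"
    unfolding s_def t_def using ind01 by (intro mult_left_le_one_le) auto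
  show ?thesis
  proof (cases "s = 0 \<or> t = 0")
    case True
    then have "?L = 0" unfolding s_def t_def by auto
    then show ?thesis using A0 B0 C0 by linarith
  next
    case False
    then have s0: "s > 0" and t0: "t > 0" unfolding s_def t_def by auto
    show ?thesis
    proof (cases "s \<le> h")
      case True
      then have "h \<le> t" using tri by linarith
      then have "t powr (-a) \<le> h powr (-a)" using h0 a0 by (intro powr_mono2') auto
      then have "t powr (-a) * s powr (-a) \<le> h powr (-a) * s powr (-a)"
        by (intro mult_right_mono) auto
      also have "\<dots> = ?A" using True unfolding s_def by (simp add: indicator_def dist_norm norm_minus_commute)
      finally show ?thesis using L1 B0 C0 by linarith
    next
      case sh: False
      show ?thesis
      proof (cases "t \<le> h")
        case True
        have "s powr (-a) \<le> h powr (-a)" using h0 a0 sh by (intro powr_mono2') auto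
        then have "t powr (-a) * s powr (-a) \<le> h powr (-a) * t powr (-a)"
          by (subst mult.commute, intro mult_right_mono) auto
        also have "\<dots> = ?B" using True unfolding t_def
          by (simp add: indicator_def dist_norm norm_minus_commute)
        finally show ?thesis using L1 A0 C0 by linarith
      next
        case False
        then have "s \<le> 3 * t" using tri2 by linarith
        then have "t powr (-a) \<le> (s / 3) powr (-a)" using s0 a0 by (intro powr_mono2') auto
        also have "(s / 3) powr (-a) = 3 powr a * s powr (-a)"
        proof -
          have "(s / 3) powr (-a) = s powr (-a) / 3 powr (-a)"
            using s0 by (auto intro: powr_divide)
          also have "\<dots> = s powr (-a) * 3 powr a"
            by (simp only: powr_minus inverse_inverse_eq divide_inverse)
          finally show ?thesis by (simp only: mult.commute)
        qed
        finally have "t powr (-a) * s powr (-a) \<le> 3 powr a * s powr (-a) * s powr (-a)"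
          by (intro mult_right_mono) auto
        also have "\<dots> = 3 powr a * s powr (-(2*a))"
        proof -
          have "s powr (-a) * s powr (-a) = s powr (-a + -a)" by (simp only: powr_add)
          also have "-a + -a = -(2*a)" by simp
          finally show ?thesis by (simp only: mult.assoc)
        qed
        finally have *: "t powr (-a) * s powr (-a) \<le> 3 powr a * s powr (-(2*a))" .
        show ?thesis
        proof (cases "x \<in> cball x0 D")
          case True
          have "?C = 3 powr a * s powr (-(2*a))"
            using True sh unfolding s_def by (simp add: indicator_def)
          then show ?thesis using * L1 A0 B0 by linarith
        next
          case False
          then have "?L = 0" by simp
          then show ?thesis using A0 B0 C0 by linarith
        qed
      qed
    qed
  qed
qed

lemma ennreal_ind_mult: "ennreal (indicator A x * f) = indicator A x * ennreal f"
  by (simp add: indicator_def)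

lemma outer_borel[measurable]: "{x::'a::euclidean_space. h \<le> norm (x - x0)} \<in> sets borel"
  by measurable

lemma mk1[measurable]: "(\<lambda>x::'a::euclidean_space. norm (x - c) powr b) \<in> borel_measurable borel"
  by measurable

lemma ennreal_meas_lborel:
  fixes f :: "'a::euclidean_space \<Rightarrow> real"
  assumes "f \<in> borel_measurable borel"
  shows "(\<lambda>x. ennreal (f x)) \<in> borel_measurable lborel"
  using measurable_compose[OF assms measurable_ennreal] by simp

lemma nn_cmult_real:
  assumes "0 \<le> c" "(\<lambda>x. ennreal (f x)) \<in> borel_measurable M"
  shows "(\<integral>\<^sup>+x. ennreal (c * f x) \<partial>M) = ennreal c * (\<integral>\<^sup>+x. ennreal (f x) \<partial>M)"
  using assms by (simp add: ennreal_mult' nn_integral_cmult)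

lemma comp_int_gen:
  fixes x0 y :: "'a::euclidean_space" and a D :: real
  assumes a0: "0 \<le> a" and aN: "a < DIM('a)" and yx0: "y \<noteq> x0"
  defines "h \<equiv> norm (y - x0) / 2"
  defines "c1 \<equiv> unit_ball_vol DIM('a) * 2 powr a / (1 - 2 powr (a - real DIM('a)))"
  shows "(\<integral>\<^sup>+x. ennreal (indicator (cball x0 D) x * (norm (y - x) powr (-a) * norm (x - x0) powr (-a))) \<partial>lborel)
    \<le> 2 * ennreal (h powr (-a) * (c1 * h powr (real DIM('a) - a)))
      + ennreal (3 powr a) * (\<integral>\<^sup>+x. ennreal (indicator {x. h \<le> norm (x - x0)} x * indicator (cball x0 D) x * norm (x - x0) powr (-(2*a))) \<partial>lborel)"
proof -
  have h0: "h > 0" using yx0 unfolding h_def by simp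
  have bi: "(\<integral>\<^sup>+x. ennreal (indicator (cball c h) x * norm (x - c) powr (-a)) \<partial>lborel) \<le> ennreal (c1 * h powr (real DIM('a) - a))" for c :: 'a
  proof -
    have "(\<integral>\<^sup>+x. ennreal (indicator (cball c h) x * norm (x - c) powr (-a)) \<partial>lborel)
       = (\<integral>\<^sup>+x. indicator (cball c h) x * ennreal (norm (x - c) powr (-a)) \<partial>lborel)"
      by (simp only: ennreal_ind_mult)
    also have "\<dots> \<le> ennreal (unit_ball_vol DIM('a) * 2 powr a * h powr (real DIM('a) - a) / (1 - 2 powr (a - real DIM('a))))"
      by (rule ball_int[OF a0 aN h0])
    also have "unit_ball_vol DIM('a) * 2 powr a * h powr (real DIM('a) - a) / (1 - 2 powr (a - real DIM('a)))
       = c1 * h powr (real DIM('a) - a)"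
      unfolding c1_def by (simp only: times_divide_eq_left mult_ac divide_inverse)
    finally show ?thesis .
  qed
  let ?A = "\<lambda>x. h powr (-a) * (indicator (cball x0 h) x * norm (x - x0) powr (-a))"
  let ?B = "\<lambda>x. h powr (-a) * (indicator (cball y h) x * norm (x - y) powr (-a))"
  let ?C = "\<lambda>x. 3 powr a * (indicator {x. h \<le> norm (x - x0)} x * indicator (cball x0 D) x * norm (x - x0) powr (-(2*a)))"
  have "(\<integral>\<^sup>+x. ennreal (indicator (cball x0 D) x * (norm (y - x) powr (-a) * norm (x - x0) powr (-a))) \<partial>lborel)
      \<le> (\<integral>\<^sup>+x. ennreal (?A x) + ennreal (?B x) + ennreal (?C x) \<partial>lborel)"
  proof (intro nn_integral_mono)
    fix x :: 'a
    have "ennreal (indicator (cball x0 D) x * (norm (y - x) powr (-a) * norm (x - x0) powr (-a)))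
       \<le> ennreal (?A x + ?B x + ?C x)"
      using pw_bound[OF a0 yx0, of D x] unfolding h_def by (intro ennreal_leI) simp
    also have "\<dots> = ennreal (?A x) + ennreal (?B x) + ennreal (?C x)"
      by (simp add: ennreal_plus)
    finally show "ennreal (indicator (cball x0 D) x * (norm (y - x) powr (-a) * norm (x - x0) powr (-a)))
       \<le> ennreal (?A x) + ennreal (?B x) + ennreal (?C x)" .
  qed
  also have "\<dots> = (\<integral>\<^sup>+x. ennreal (?A x) \<partial>lborel) + (\<integral>\<^sup>+x. ennreal (?B x) \<partial>lborel) + (\<integral>\<^sup>+x. ennreal (?C x) \<partial>lborel)"
  proof -
    have mA: "(\<lambda>x. ennreal (?A x)) \<in> borel_measurable lborel"
      by (intro ennreal_meas_lborel borel_measurable_times borel_measurable_const borel_measurable_indicator mk1) simp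
    have mB: "(\<lambda>x. ennreal (?B x)) \<in> borel_measurable lborel"
      by (intro ennreal_meas_lborel borel_measurable_times borel_measurable_const borel_measurable_indicator mk1) simp
    have mC: "(\<lambda>x. ennreal (?C x)) \<in> borel_measurable lborel"
      by (intro ennreal_meas_lborel borel_measurable_times borel_measurable_const borel_measurable_indicator mk1 outer_borel) simp
    have mAB: "(\<lambda>x. ennreal (?A x) + ennreal (?B x)) \<in> borel_measurable lborel"
      using mA mB by (rule borel_measurable_add)
    show ?thesis
      by (simp only: nn_integral_add[OF mAB mC] nn_integral_add[OF mA mB])
  qed
  also have "(\<integral>\<^sup>+x. ennreal (?A x) \<partial>lborel) = ennreal (h powr (-a)) * (\<integral>\<^sup>+x. ennreal (indicator (cball x0 h) x * norm (x - x0) powr (-a)) \<partial>lborel)"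
    by (intro nn_cmult_real ennreal_meas_lborel borel_measurable_times borel_measurable_const borel_measurable_indicator mk1 outer_borel) simp_all
  also have "(\<integral>\<^sup>+x. ennreal (?B x) \<partial>lborel) = ennreal (h powr (-a)) * (\<integral>\<^sup>+x. ennreal (indicator (cball y h) x * norm (x - y) powr (-a)) \<partial>lborel)"
    by (intro nn_cmult_real ennreal_meas_lborel borel_measurable_times borel_measurable_const borel_measurable_indicator mk1 outer_borel) simp_all
  also have "(\<integral>\<^sup>+x. ennreal (?C x) \<partial>lborel) = ennreal (3 powr a) * (\<integral>\<^sup>+x. ennreal (indicator {x. h \<le> norm (x - x0)} x * indicator (cball x0 D) x * norm (x - x0) powr (-(2*a))) \<partial>lborel)"
    by (intro nn_cmult_real ennreal_meas_lborel borel_measurable_times borel_measurable_const borel_measurable_indicator mk1 outer_borel) simp_all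
  also have "ennreal (h powr (-a)) * (\<integral>\<^sup>+x. ennreal (indicator (cball x0 h) x * norm (x - x0) powr (-a)) \<partial>lborel)
      \<le> ennreal (h powr (-a)) * ennreal (c1 * h powr (real DIM('a) - a))"
    by (intro mult_left_mono bi) auto
  also have "ennreal (h powr (-a)) * (\<integral>\<^sup>+x. ennreal (indicator (cball y h) x * norm (x - y) powr (-a)) \<partial>lborel)
      \<le> ennreal (h powr (-a)) * ennreal (c1 * h powr (real DIM('a) - a))"
    by (intro mult_left_mono bi) auto
  also have "ennreal (h powr (-a)) * ennreal (c1 * h powr (real DIM('a) - a)) + ennreal (h powr (-a)) * ennreal (c1 * h powr (real DIM('a) - a))
     = 2 * ennreal (h powr (-a) * (c1 * h powr (real DIM('a) - a)))"
    by (subst ennreal_mult'[of "h powr -a"]) (simp_all add: mult_2)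
  finally show ?thesis by (simp add: add_mono)
qed

lemma powr_combine: "(h::real) > 0 \<Longrightarrow> h powr (-a) * (c1 * h powr (n - a)) = c1 * h powr (n - 2 * a)"
proof -
  assume h: "h > 0"
  have "h powr (-a) * h powr (n - a) = h powr (-a + (n - a))" by (simp only: powr_add)
  also have "-a + (n - a) = n - 2 * a" by simp
  finally show ?thesis by (simp only: mult_ac)
qed

lemma half_powr: "(d::real) > 0 \<Longrightarrow> (d / 2) powr e = 2 powr (-e) * d powr e"
proof -
  assume d: "d > 0"
  have "(d / 2) powr e = d powr e / 2 powr e" using d by (auto intro: powr_divide)
  also have "\<dots> = 2 powr (-e) * d powr e" by (simp only: powr_minus divide_inverse mult.commute)
  finally show ?thesis .
qed

lemma c1_nonneg: "(p::real) < n \<Longrightarrow> 0 \<le> n \<Longrightarrow> 0 \<le> unit_ball_vol n * 2 powr p / (1 - 2 powr (p - n))"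
proof -
  assume "p < n" "0 \<le> n"
  have "2 powr (p - n) < 2 powr 0" using \<open>p < n\<close> by (intro powr_less_mono) auto
  then have "1 - 2 powr (p - n) > 0" by simp
  moreover have "unit_ball_vol n \<ge> 0" using \<open>0 \<le> n\<close> by (rule unit_ball_vol_nonneg)
  ultimately show ?thesis by (auto intro!: divide_nonneg_pos mult_nonneg_nonneg)
qed

lemma c2_nonneg: "(n::real) < p \<Longrightarrow> 0 \<le> n \<Longrightarrow> 0 \<le> unit_ball_vol n * 2 ^ k / (1 - 2 powr (n - p))"
proof -
  assume "n < p" "0 \<le> n"
  have "2 powr (n - p) < 2 powr 0" using \<open>n < p\<close> by (intro powr_less_mono) auto
  then have "1 - 2 powr (n - p) > 0" by simp
  moreover have "unit_ball_vol n \<ge> 0" using \<open>0 \<le> n\<close> by (rule unit_ball_vol_nonneg)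
  ultimately show ?thesis by (auto intro!: divide_nonneg_pos mult_nonneg_nonneg)
qed

lemma comp_gt:
  fixes a :: real
  assumes a1: "real DIM('a) < 2 * a" and aN: "a < DIM('a)"
  shows "\<exists>C\<ge>0. \<forall>(x0::'a::euclidean_space) y D. y \<noteq> x0 \<longrightarrow>
    (\<integral>\<^sup>+x. ennreal (indicator (cball x0 D) x * (norm (y - x) powr (-a) * norm (x - x0) powr (-a))) \<partial>lborel)
      \<le> ennreal (C * norm (y - x0) powr (real DIM('a) - 2 * a))"
proof -
  define n where "n = real DIM('a)"
  define c1 where "c1 = unit_ball_vol n * 2 powr a / (1 - 2 powr (a - n))"
  define c2 where "c2 = unit_ball_vol n * 2 ^ DIM('a) / (1 - 2 powr (n - 2 * a))"
  have a0: "0 \<le> a" using a1 by simp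
  have c1: "c1 \<ge> 0" unfolding c1_def using aN by (intro c1_nonneg) (auto simp: n_def)
  have c2: "c2 \<ge> 0" unfolding c2_def using a1 by (intro c2_nonneg) (auto simp: n_def)
  define C where "C = (2 * c1 + 3 powr a * c2) * 2 powr (-(n - 2 * a))"
  have C0: "C \<ge> 0" unfolding C_def using c1 c2 by auto
  show ?thesis
  proof (intro exI[of _ C] conjI C0 allI impI)
    fix x0 y :: 'a and D :: real
    assume yx0: "y \<noteq> x0"
    define d where "d = norm (y - x0)"
    define h where "h = d / 2"
    have d0: "d > 0" and h0: "h > 0" using yx0 by (auto simp: d_def h_def)
    have third: "(\<integral>\<^sup>+x. ennreal (indicator {x. h \<le> norm (x - x0)} x * indicator (cball x0 D) x * norm (x - x0) powr (-(2*a))) \<partial>lborel)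
       \<le> ennreal (c2 * h powr (n - 2 * a))"
    proof -
      have "(\<integral>\<^sup>+x. ennreal (indicator {x. h \<le> norm (x - x0)} x * indicator (cball x0 D) x * norm (x - x0) powr (-(2*a))) \<partial>lborel)
         \<le> (\<integral>\<^sup>+x. indicator {x. h \<le> norm (x - x0)} x * ennreal (norm (x - x0) powr (-(2*a))) \<partial>lborel)"
        by (intro nn_integral_mono) (auto simp: indicator_def)
      also have "\<dots> \<le> ennreal (unit_ball_vol DIM('a) * 2 ^ DIM('a) * h powr (real DIM('a) - 2 * a) / (1 - 2 powr (real DIM('a) - 2 * a)))"
        using outer_int[of "2 * a" h x0] a1 h0 by simp
      also have "unit_ball_vol DIM('a) * 2 ^ DIM('a) * h powr (real DIM('a) - 2 * a) / (1 - 2 powr (real DIM('a) - 2 * a))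
         = c2 * h powr (n - 2 * a)"
        unfolding c2_def n_def by (simp only: times_divide_eq_left mult_ac divide_inverse)
      finally show ?thesis .
    qed
    have "(\<integral>\<^sup>+x. ennreal (indicator (cball x0 D) x * (norm (y - x) powr (-a) * norm (x - x0) powr (-a))) \<partial>lborel)
      \<le> 2 * ennreal (h powr (-a) * (c1 * h powr (n - a)))
      + ennreal (3 powr a) * (\<integral>\<^sup>+x. ennreal (indicator {x. h \<le> norm (x - x0)} x * indicator (cball x0 D) x * norm (x - x0) powr (-(2*a))) \<partial>lborel)"
      using comp_int_gen[OF a0 aN yx0, of D] unfolding h_def d_def c1_def n_def .
    also have "\<dots> \<le> 2 * ennreal (c1 * h powr (n - 2 * a)) + ennreal (3 powr a) * ennreal (c2 * h powr (n - 2 * a))"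
      using third h0 by (simp only: powr_combine) (intro add_left_mono mult_left_mono, auto)
    also have "\<dots> = ennreal ((2 * c1 + 3 powr a * c2) * h powr (n - 2 * a))"
    proof -
      define H where "H = h powr (n - 2 * a)"
      have H0: "H \<ge> 0" unfolding H_def by simp
      have "(2 * c1 + 3 powr a * c2) * H = 2 * (c1 * H) + 3 powr a * (c2 * H)" by (simp add: algebra_simps)
      then have "ennreal ((2 * c1 + 3 powr a * c2) * H) = ennreal (2 * (c1 * H)) + ennreal (3 powr a * (c2 * H))"
        using c1 c2 H0 by (metis ennreal_plus mult_nonneg_nonneg zero_le_numeral powr_ge_zero)
      also have "\<dots> = 2 * ennreal (c1 * H) + ennreal (3 powr a) * ennreal (c2 * H)"
        by (simp add: ennreal_mult')
      finally show ?thesis unfolding H_def by simp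
    qed
    also have "(2 * c1 + 3 powr a * c2) * h powr (n - 2 * a) = C * d powr (n - 2 * a)"
      unfolding C_def h_def using half_powr[OF d0, of "n - 2 * a"] by (simp only: mult.assoc)
    finally show "(\<integral>\<^sup>+x. ennreal (indicator (cball x0 D) x * (norm (y - x) powr (-a) * norm (x - x0) powr (-a))) \<partial>lborel)
      \<le> ennreal (C * norm (y - x0) powr (real DIM('a) - 2 * a))" unfolding d_def n_def .
  qed
qed

lemma comp_lt:
  fixes a D :: real
  assumes a0: "0 \<le> a" and a1: "2 * a < real DIM('a)" and D0: "D > 0"
  shows "\<exists>C\<ge>0. \<forall>(x0::'a::euclidean_space) y. y \<noteq> x0 \<longrightarrow> norm (y - x0) \<le> D \<longrightarrow>
    (\<integral>\<^sup>+x. ennreal (indicator (cball x0 D) x * (norm (y - x) powr (-a) * norm (x - x0) powr (-a))) \<partial>lborel)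
      \<le> ennreal C"
proof -
  define n where "n = real DIM('a)"
  have aN: "a < DIM('a)" using a0 a1 by simp
  define c1 where "c1 = unit_ball_vol n * 2 powr a / (1 - 2 powr (a - n))"
  define c3 where "c3 = unit_ball_vol n * 2 powr (2 * a) / (1 - 2 powr (2 * a - n))"
  have c1: "c1 \<ge> 0" unfolding c1_def using aN by (intro c1_nonneg) (auto simp: n_def)
  have c3: "c3 \<ge> 0" unfolding c3_def using a1 by (intro c1_nonneg) (auto simp: n_def)
  define C where "C = (2 * c1 + 3 powr a * c3) * D powr (n - 2 * a)"
  have C0: "C \<ge> 0" unfolding C_def using c1 c3 by auto
  show ?thesis
  proof (intro exI[of _ C] conjI C0 allI impI)
    fix x0 y :: 'a
    assume yx0: "y \<noteq> x0" and yD: "norm (y - x0) \<le> D"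
    define d where "d = norm (y - x0)"
    define h where "h = d / 2"
    have d0: "d > 0" and h0: "h > 0" using yx0 by (auto simp: d_def h_def)
    have hD: "h \<le> D" using yD d0 D0 unfolding h_def d_def by simp
    have third: "(\<integral>\<^sup>+x. ennreal (indicator {x. h \<le> norm (x - x0)} x * indicator (cball x0 D) x * norm (x - x0) powr (-(2*a))) \<partial>lborel)
       \<le> ennreal (c3 * D powr (n - 2 * a))"
    proof -
      have "(\<integral>\<^sup>+x. ennreal (indicator {x. h \<le> norm (x - x0)} x * indicator (cball x0 D) x * norm (x - x0) powr (-(2*a))) \<partial>lborel)
         \<le> (\<integral>\<^sup>+x. indicator (cball x0 D) x * ennreal (norm (x - x0) powr (-(2*a))) \<partial>lborel)"
        by (intro nn_integral_mono) (auto simp: indicator_def)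
      also have "\<dots> \<le> ennreal (unit_ball_vol DIM('a) * 2 powr (2 * a) * D powr (real DIM('a) - 2 * a) / (1 - 2 powr (2 * a - real DIM('a))))"
        using ball_int[of "2 * a" D x0] a0 a1 D0 by simp
      also have "unit_ball_vol DIM('a) * 2 powr (2 * a) * D powr (real DIM('a) - 2 * a) / (1 - 2 powr (2 * a - real DIM('a)))
         = c3 * D powr (n - 2 * a)"
        unfolding c3_def n_def by (simp only: times_divide_eq_left mult_ac divide_inverse)
      finally show ?thesis .
    qed
    have hpow: "h powr (n - 2 * a) \<le> D powr (n - 2 * a)"
      using h0 hD a1 unfolding n_def by (intro powr_mono2) auto
    have "(\<integral>\<^sup>+x. ennreal (indicator (cball x0 D) x * (norm (y - x) powr (-a) * norm (x - x0) powr (-a))) \<partial>lborel)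
      \<le> 2 * ennreal (h powr (-a) * (c1 * h powr (n - a)))
      + ennreal (3 powr a) * (\<integral>\<^sup>+x. ennreal (indicator {x. h \<le> norm (x - x0)} x * indicator (cball x0 D) x * norm (x - x0) powr (-(2*a))) \<partial>lborel)"
      using comp_int_gen[OF a0 aN yx0, of D] unfolding h_def d_def c1_def n_def .
    also have "\<dots> \<le> 2 * ennreal (c1 * D powr (n - 2 * a)) + ennreal (3 powr a) * ennreal (c3 * D powr (n - 2 * a))"
    proof -
      have "ennreal (h powr (-a) * (c1 * h powr (n - a))) \<le> ennreal (c1 * D powr (n - 2 * a))"
        using h0 hpow c1 by (simp only: powr_combine) (intro ennreal_leI mult_left_mono, auto)
      then show ?thesis using third by (intro add_mono mult_left_mono) auto
    qed
    also have "\<dots> = ennreal C"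
    proof -
      define H where "H = D powr (n - 2 * a)"
      have H0: "H \<ge> 0" unfolding H_def by simp
      have "(2 * c1 + 3 powr a * c3) * H = 2 * (c1 * H) + 3 powr a * (c3 * H)" by (simp add: algebra_simps)
      then have "ennreal ((2 * c1 + 3 powr a * c3) * H) = ennreal (2 * (c1 * H)) + ennreal (3 powr a * (c3 * H))"
        using c1 c3 H0 by (metis ennreal_plus mult_nonneg_nonneg zero_le_numeral powr_ge_zero)
      also have "\<dots> = 2 * ennreal (c1 * H) + ennreal (3 powr a) * ennreal (c3 * H)"
        by (simp add: ennreal_mult')
      finally show ?thesis unfolding H_def C_def by simp
    qed
    finally show "(\<integral>\<^sup>+x. ennreal (indicator (cball x0 D) x * (norm (y - x) powr (-a) * norm (x - x0) powr (-a))) \<partial>lborel)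
      \<le> ennreal C" .
  qed
qed

lemma snd_meas_leb: "(\<lambda>p. snd p) \<in> borel_measurable (lebesgue_on S \<Otimes>\<^sub>M lebesgue_on T)"
  using measurable_compose[OF measurable_snd id_borel_measurable_lebesgue_on] by (simp add: id_def)

lemma fst_meas_leb: "(\<lambda>p. fst p) \<in> borel_measurable (lebesgue_on S \<Otimes>\<^sub>M lebesgue_on T)"
  using measurable_compose[OF measurable_fst id_borel_measurable_lebesgue_on] by (simp add: id_def)

lemma kmeas_borel[measurable]: "(\<lambda>z::'a::euclidean_space. ennreal (norm z powr b)) \<in> borel_measurable borel"
  by measurable

lemma kdiff_pair: "(\<lambda>p. ennreal (norm (snd p - fst p) powr b)) \<in> borel_measurable (lebesgue_on S \<Otimes>\<^sub>M lebesgue_on T)"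
proof -
  have "(\<lambda>p. snd p - fst p) \<in> borel_measurable (lebesgue_on S \<Otimes>\<^sub>M lebesgue_on (T::'a::euclidean_space set))"
    by (intro borel_measurable_diff snd_meas_leb fst_meas_leb)
  from measurable_compose[OF this kmeas_borel] show ?thesis by simp
qed

lemma kfst_pair: "(\<lambda>p. ennreal (norm (fst p - c) powr b)) \<in> borel_measurable (lebesgue_on S \<Otimes>\<^sub>M lebesgue_on (T::'a::euclidean_space set))"
proof -
  have "(\<lambda>p. fst p - c) \<in> borel_measurable (lebesgue_on S \<Otimes>\<^sub>M lebesgue_on T)"
    by (intro borel_measurable_diff fst_meas_leb borel_measurable_const)
  from measurable_compose[OF this kmeas_borel] show ?thesis by simp
qed

lemma k1_leb: "(\<lambda>x. ennreal (norm (x - c) powr b)) \<in> borel_measurable (lebesgue_on (S::'a::euclidean_space set))"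
proof -
  have "(\<lambda>x. x - c) \<in> borel_measurable (lebesgue_on S)"
    using id_borel_measurable_lebesgue_on[of S] by (intro borel_measurable_diff borel_measurable_const) (simp add: id_def)
  from measurable_compose[OF this kmeas_borel] show ?thesis by simp
qed

lemma k2_leb: "(\<lambda>x. ennreal (norm (c - x) powr b)) \<in> borel_measurable (lebesgue_on (S::'a::euclidean_space set))"
proof -
  have "(\<lambda>x. c - x) \<in> borel_measurable (lebesgue_on S)"
    using id_borel_measurable_lebesgue_on[of S] by (intro borel_measurable_diff borel_measurable_const) (simp add: id_def)
  from measurable_compose[OF this kmeas_borel] show ?thesis by simp
qed

lemma iter_core:
  fixes \<Omega> :: "'a::euclidean_space set" and f :: "'a \<Rightarrow> ennreal" and a C :: real
  assumes sf: "sigma_finite_measure (lebesgue_on \<Omega>)"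
    and fm: "f \<in> borel_measurable (lebesgue_on \<Omega>)"
    and H: "AE x0 in lebesgue_on \<Omega>. f x0 \<le> ennreal C * (\<integral>\<^sup>+x. f x * ennreal (norm (x - x0) powr (-a)) \<partial>lebesgue_on \<Omega>)"
  shows "AE x0 in lebesgue_on \<Omega>. f x0 \<le> ennreal C * ennreal C *
     (\<integral>\<^sup>+y. f y * (\<integral>\<^sup>+x. ennreal (norm (y - x) powr (-a)) * ennreal (norm (x - x0) powr (-a)) \<partial>lebesgue_on \<Omega>) \<partial>lebesgue_on \<Omega>)"
  using H
proof (rule AE_mp, intro AE_I2 impI)
  let ?M = "lebesgue_on \<Omega>"
  interpret P: pair_sigma_finite ?M ?M
    unfolding pair_sigma_finite_def using sf by simp
  fix x0 assume hx0: "f x0 \<le> ennreal C * (\<integral>\<^sup>+x. f x * ennreal (norm (x - x0) powr (-a)) \<partial>?M)"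
  define F where "F x y = f y * ennreal (norm (y - x) powr (-a)) * ennreal (norm (x - x0) powr (-a))" for x y
  have Fm: "case_prod F \<in> borel_measurable (?M \<Otimes>\<^sub>M ?M)"
  proof -
    have fs: "(\<lambda>p. f (snd p)) \<in> borel_measurable (?M \<Otimes>\<^sub>M ?M)"
      by (rule measurable_compose[OF measurable_snd fm])
    show ?thesis unfolding F_def case_prod_beta
      by (intro borel_measurable_times_ennreal kdiff_pair kfst_pair fs)
  qed
  have "(\<integral>\<^sup>+x. f x * ennreal (norm (x - x0) powr (-a)) \<partial>?M)
     \<le> (\<integral>\<^sup>+x. (ennreal C * (\<integral>\<^sup>+y. f y * ennreal (norm (y - x) powr (-a)) \<partial>?M)) * ennreal (norm (x - x0) powr (-a)) \<partial>?M)"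
    using H by (intro nn_integral_mono_AE) (auto elim!: eventually_mono intro: mult_right_mono)
  also have "\<dots> = (\<integral>\<^sup>+x. ennreal C * (\<integral>\<^sup>+y. F x y \<partial>?M) \<partial>?M)"
  proof (intro nn_integral_cong)
    fix x
    have "(\<integral>\<^sup>+y. f y * ennreal (norm (y - x) powr (-a)) \<partial>?M) * ennreal (norm (x - x0) powr (-a))
        = (\<integral>\<^sup>+y. F x y \<partial>?M)"
      unfolding F_def by (rule nn_integral_multc[symmetric]) (intro borel_measurable_times_ennreal fm k1_leb)
    then show "(ennreal C * (\<integral>\<^sup>+y. f y * ennreal (norm (y - x) powr (-a)) \<partial>?M)) * ennreal (norm (x - x0) powr (-a))
        = ennreal C * (\<integral>\<^sup>+y. F x y \<partial>?M)" by (simp add: mult.assoc)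
  qed
  also have "\<dots> = ennreal C * (\<integral>\<^sup>+x. (\<integral>\<^sup>+y. F x y \<partial>?M) \<partial>?M)"
    by (rule nn_integral_cmult) (rule sigma_finite_measure.borel_measurable_nn_integral[OF sf Fm])
  also have "(\<integral>\<^sup>+x. (\<integral>\<^sup>+y. F x y \<partial>?M) \<partial>?M) = (\<integral>\<^sup>+y. (\<integral>\<^sup>+x. F x y \<partial>?M) \<partial>?M)"
    by (rule P.Fubini'[OF Fm, symmetric])
  also have "\<dots> = (\<integral>\<^sup>+y. f y * (\<integral>\<^sup>+x. ennreal (norm (y - x) powr (-a)) * ennreal (norm (x - x0) powr (-a)) \<partial>?M) \<partial>?M)"
  proof (intro nn_integral_cong)
    fix y
    show "(\<integral>\<^sup>+x. F x y \<partial>?M) = f y * (\<integral>\<^sup>+x. ennreal (norm (y - x) powr (-a)) * ennreal (norm (x - x0) powr (-a)) \<partial>?M)"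
      unfolding F_def mult.assoc
      by (rule nn_integral_cmult) (intro borel_measurable_times_ennreal k1_leb k2_leb)
  qed
  finally have "(\<integral>\<^sup>+x. f x * ennreal (norm (x - x0) powr (-a)) \<partial>?M) \<le> ennreal C *
     (\<integral>\<^sup>+y. f y * (\<integral>\<^sup>+x. ennreal (norm (y - x) powr (-a)) * ennreal (norm (x - x0) powr (-a)) \<partial>?M) \<partial>?M)" .
  then have "ennreal C * (\<integral>\<^sup>+x. f x * ennreal (norm (x - x0) powr (-a)) \<partial>?M) \<le> ennreal C * (ennreal C *
     (\<integral>\<^sup>+y. f y * (\<integral>\<^sup>+x. ennreal (norm (y - x) powr (-a)) * ennreal (norm (x - x0) powr (-a)) \<partial>?M) \<partial>?M))"
    by (rule mult_left_mono) simp
  with hx0 show "f x0 \<le> ennreal C * ennreal C *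
     (\<integral>\<^sup>+y. f y * (\<integral>\<^sup>+x. ennreal (norm (y - x) powr (-a)) * ennreal (norm (x - x0) powr (-a)) \<partial>?M) \<partial>?M)"
    by (simp add: mult.assoc)
qed

lemma AE_leb_ne:
  assumes "\<Omega> \<in> sets lborel"
  shows "AE y in lebesgue_on \<Omega>. y \<noteq> (c::'a::euclidean_space)"
proof -
  have "AE y in lebesgue. y \<noteq> c" by (rule AE_completion[OF AE_lborel_singleton])
  then show ?thesis using assms by (subst AE_restrict_space_iff) (auto elim: eventually_mono)
qed

lemma inner_to_lborel:
  fixes \<Omega> :: "'a::euclidean_space set"
  assumes \<Omega>m: "\<Omega> \<in> sets lborel" and diam: "\<forall>x\<in>\<Omega>. \<forall>y\<in>\<Omega>. norm (x - y) \<le> D" and x0: "x0 \<in> \<Omega>"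
  shows "(\<integral>\<^sup>+x. ennreal (norm (y - x) powr (-a)) * ennreal (norm (x - x0) powr (-a)) \<partial>lebesgue_on \<Omega>)
     \<le> (\<integral>\<^sup>+x. ennreal (indicator (cball x0 D) x * (norm (y - x) powr (-a) * norm (x - x0) powr (-a))) \<partial>lborel)"
proof -
  have \<Omega>l: "\<Omega> \<inter> space lebesgue \<in> sets lebesgue" using \<Omega>m by simp
  have "(\<integral>\<^sup>+x. ennreal (norm (y - x) powr (-a)) * ennreal (norm (x - x0) powr (-a)) \<partial>lebesgue_on \<Omega>)
     = (\<integral>\<^sup>+x. ennreal (norm (y - x) powr (-a)) * ennreal (norm (x - x0) powr (-a)) * indicator \<Omega> x \<partial>lebesgue)"
    by (rule nn_integral_restrict_space[OF \<Omega>l])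
  also have "\<dots> = (\<integral>\<^sup>+x. ennreal (norm (y - x) powr (-a)) * ennreal (norm (x - x0) powr (-a)) * indicator \<Omega> x \<partial>lborel)"
    by (rule nn_integral_completion)
  also have "\<dots> \<le> (\<integral>\<^sup>+x. ennreal (indicator (cball x0 D) x * (norm (y - x) powr (-a) * norm (x - x0) powr (-a))) \<partial>lborel)"
  proof (intro nn_integral_mono)
    fix x
    show "ennreal (norm (y - x) powr (-a)) * ennreal (norm (x - x0) powr (-a)) * indicator \<Omega> x
       \<le> ennreal (indicator (cball x0 D) x * (norm (y - x) powr (-a) * norm (x - x0) powr (-a)))"
    proof (cases "x \<in> \<Omega>")
      case True
      then have "x \<in> cball x0 D" using diam x0 by (auto simp: dist_norm)
      then show ?thesis using True by (simp add: ennreal_mult')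
    qed simp
  qed
  finally show ?thesis .
qed

lemma step_gt:
  fixes \<Omega> :: "'a::euclidean_space set" and f :: "'a \<Rightarrow> ennreal" and a C D :: real
  assumes \<Omega>m: "\<Omega> \<in> sets lborel" and diam: "\<forall>x\<in>\<Omega>. \<forall>y\<in>\<Omega>. norm (x - y) \<le> D"
    and sf: "sigma_finite_measure (lebesgue_on \<Omega>)"
    and fm: "f \<in> borel_measurable (lebesgue_on \<Omega>)"
    and a1: "real DIM('a) < 2 * a" and aN: "a < DIM('a)" and C0: "C \<ge> 0"
    and H: "AE x0 in lebesgue_on \<Omega>. f x0 \<le> ennreal C * (\<integral>\<^sup>+x. f x * ennreal (norm (x - x0) powr (-a)) \<partial>lebesgue_on \<Omega>)"
  shows "\<exists>C'\<ge>0. AE x0 in lebesgue_on \<Omega>. f x0 \<le> ennreal C' * (\<integral>\<^sup>+x. f x * ennreal (norm (x - x0) powr (-(2 * a - real DIM('a)))) \<partial>lebesgue_on \<Omega>)"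
proof -
  obtain K where K0: "K \<ge> 0" and K: "\<And>(x0::'a) y D. y \<noteq> x0 \<Longrightarrow>
    (\<integral>\<^sup>+x. ennreal (indicator (cball x0 D) x * (norm (y - x) powr (-a) * norm (x - x0) powr (-a))) \<partial>lborel)
      \<le> ennreal (K * norm (y - x0) powr (real DIM('a) - 2 * a))"
    using comp_gt[OF a1 aN] by blast
  let ?M = "lebesgue_on \<Omega>"
  show ?thesis
  proof (intro exI[of _ "C * C * K"] conjI)
    show "C * C * K \<ge> 0" using C0 K0 by simp
    have core: "AE x0 in ?M. f x0 \<le> ennreal C * ennreal C *
     (\<integral>\<^sup>+y. f y * (\<integral>\<^sup>+x. ennreal (norm (y - x) powr (-a)) * ennreal (norm (x - x0) powr (-a)) \<partial>?M) \<partial>?M)"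
      by (rule iter_core[OF sf fm H])
    have sp: "AE x0 in ?M. x0 \<in> \<Omega>" by (rule AE_I2) simp
    show "AE x0 in ?M. f x0 \<le> ennreal (C * C * K) * (\<integral>\<^sup>+x. f x * ennreal (norm (x - x0) powr (-(2 * a - real DIM('a)))) \<partial>?M)"
      using core sp
    proof eventually_elim
      case (elim x0)
      note outer = elim
      have "(\<integral>\<^sup>+y. f y * (\<integral>\<^sup>+x. ennreal (norm (y - x) powr (-a)) * ennreal (norm (x - x0) powr (-a)) \<partial>?M) \<partial>?M)
          \<le> (\<integral>\<^sup>+y. ennreal K * (f y * ennreal (norm (y - x0) powr (-(2 * a - real DIM('a))))) \<partial>?M)"
      proof (intro nn_integral_mono_AE)
        show "AE y in ?M. f y * (\<integral>\<^sup>+x. ennreal (norm (y - x) powr (-a)) * ennreal (norm (x - x0) powr (-a)) \<partial>?M)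
           \<le> ennreal K * (f y * ennreal (norm (y - x0) powr (-(2 * a - real DIM('a)))))"
          using AE_leb_ne[OF \<Omega>m, where c=x0]
        proof eventually_elim
          case (elim y)
          have "(\<integral>\<^sup>+x. ennreal (norm (y - x) powr (-a)) * ennreal (norm (x - x0) powr (-a)) \<partial>?M)
             \<le> ennreal (K * norm (y - x0) powr (real DIM('a) - 2 * a))"
            using inner_to_lborel[OF \<Omega>m diam outer(2)] K[OF elim] by (rule order_trans)
          also have "\<dots> = ennreal K * ennreal (norm (y - x0) powr (-(2 * a - real DIM('a))))"
            using K0 by (simp add: ennreal_mult')
          finally have "f y * (\<integral>\<^sup>+x. ennreal (norm (y - x) powr (-a)) * ennreal (norm (x - x0) powr (-a)) \<partial>?M)
             \<le> f y * (ennreal K * ennreal (norm (y - x0) powr (-(2 * a - real DIM('a)))))"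
            by (rule mult_left_mono) simp
          then show ?case by (simp only: mult_ac)
        qed
      qed
      also have "\<dots> = ennreal K * (\<integral>\<^sup>+y. f y * ennreal (norm (y - x0) powr (-(2 * a - real DIM('a)))) \<partial>?M)"
        by (rule nn_integral_cmult) (intro borel_measurable_times_ennreal fm k1_leb)
      finally have "ennreal C * ennreal C * (\<integral>\<^sup>+y. f y * (\<integral>\<^sup>+x. ennreal (norm (y - x) powr (-a)) * ennreal (norm (x - x0) powr (-a)) \<partial>?M) \<partial>?M)
          \<le> ennreal C * ennreal C * (ennreal K * (\<integral>\<^sup>+y. f y * ennreal (norm (y - x0) powr (-(2 * a - real DIM('a)))) \<partial>?M))"
        by (rule mult_left_mono) simp
      moreover have "ennreal (C * C * K) = ennreal C * ennreal C * ennreal K"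
        using C0 K0 by (simp add: ennreal_mult)
      ultimately show ?case using outer(1) by (simp only: mult.assoc)
    qed
  qed
qed

lemma step_lt:
  fixes \<Omega> :: "'a::euclidean_space set" and f :: "'a \<Rightarrow> ennreal" and a C D :: real
  assumes \<Omega>m: "\<Omega> \<in> sets lborel" and diam: "\<forall>x\<in>\<Omega>. \<forall>y\<in>\<Omega>. norm (x - y) \<le> D" and D0: "D > 0"
    and sf: "sigma_finite_measure (lebesgue_on \<Omega>)"
    and fm: "f \<in> borel_measurable (lebesgue_on \<Omega>)"
    and a0: "0 \<le> a" and a1: "2 * a < real DIM('a)" and C0: "C \<ge> 0"
    and H: "AE x0 in lebesgue_on \<Omega>. f x0 \<le> ennreal C * (\<integral>\<^sup>+x. f x * ennreal (norm (x - x0) powr (-a)) \<partial>lebesgue_on \<Omega>)"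
  shows "\<exists>C'\<ge>0. AE x0 in lebesgue_on \<Omega>. f x0 \<le> ennreal C' * (\<integral>\<^sup>+x. f x \<partial>lebesgue_on \<Omega>)"
proof -
  obtain K where K0: "K \<ge> 0" and K: "\<And>(x0::'a) y. y \<noteq> x0 \<Longrightarrow> norm (y - x0) \<le> D \<Longrightarrow>
    (\<integral>\<^sup>+x. ennreal (indicator (cball x0 D) x * (norm (y - x) powr (-a) * norm (x - x0) powr (-a))) \<partial>lborel)
      \<le> ennreal K"
    using comp_lt[OF a0 a1 D0] by blast
  let ?M = "lebesgue_on \<Omega>"
  show ?thesis
  proof (intro exI[of _ "C * C * K"] conjI)
    show "C * C * K \<ge> 0" using C0 K0 by simp
    have core: "AE x0 in ?M. f x0 \<le> ennreal C * ennreal C *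
     (\<integral>\<^sup>+y. f y * (\<integral>\<^sup>+x. ennreal (norm (y - x) powr (-a)) * ennreal (norm (x - x0) powr (-a)) \<partial>?M) \<partial>?M)"
      by (rule iter_core[OF sf fm H])
    have sp: "AE x0 in ?M. x0 \<in> \<Omega>" by (rule AE_I2) simp
    show "AE x0 in ?M. f x0 \<le> ennreal (C * C * K) * (\<integral>\<^sup>+x. f x \<partial>?M)"
      using core sp
    proof eventually_elim
      case (elim x0)
      note outer = elim
      have "(\<integral>\<^sup>+y. f y * (\<integral>\<^sup>+x. ennreal (norm (y - x) powr (-a)) * ennreal (norm (x - x0) powr (-a)) \<partial>?M) \<partial>?M)
          \<le> (\<integral>\<^sup>+y. ennreal K * f y \<partial>?M)"
      proof (intro nn_integral_mono_AE)
        have sp2: "AE y in ?M. y \<in> \<Omega>" by (rule AE_I2) simp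
        show "AE y in ?M. f y * (\<integral>\<^sup>+x. ennreal (norm (y - x) powr (-a)) * ennreal (norm (x - x0) powr (-a)) \<partial>?M)
           \<le> ennreal K * f y"
          using AE_leb_ne[OF \<Omega>m, where c=x0] sp2
        proof eventually_elim
          case (elim y)
          have yD: "norm (y - x0) \<le> D" using diam elim(2) outer(2) by blast
          have "(\<integral>\<^sup>+x. ennreal (norm (y - x) powr (-a)) * ennreal (norm (x - x0) powr (-a)) \<partial>?M)
             \<le> ennreal K"
            using inner_to_lborel[OF \<Omega>m diam outer(2)] K[OF elim(1) yD] by (rule order_trans)
          then have "f y * (\<integral>\<^sup>+x. ennreal (norm (y - x) powr (-a)) * ennreal (norm (x - x0) powr (-a)) \<partial>?M)
             \<le> f y * ennreal K"
            by (rule mult_left_mono) simp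
          then show ?case by (simp only: mult_ac)
        qed
      qed
      also have "\<dots> = ennreal K * (\<integral>\<^sup>+y. f y \<partial>?M)"
        by (rule nn_integral_cmult) (rule fm)
      finally have "ennreal C * ennreal C * (\<integral>\<^sup>+y. f y * (\<integral>\<^sup>+x. ennreal (norm (y - x) powr (-a)) * ennreal (norm (x - x0) powr (-a)) \<partial>?M) \<partial>?M)
          \<le> ennreal C * ennreal C * (ennreal K * (\<integral>\<^sup>+y. f y \<partial>?M))"
        by (rule mult_left_mono) simp
      moreover have "ennreal (C * C * K) = ennreal C * ennreal C * ennreal K"
        using C0 K0 by (simp add: ennreal_mult)
      ultimately show ?case using outer(1) by (simp only: mult.assoc)
    qed
  qed
qed

lemma bump:
  fixes \<Omega> :: "'a::euclidean_space set" and f :: "'a \<Rightarrow> ennreal" and a b C D :: real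
  assumes diam: "\<forall>x\<in>\<Omega>. \<forall>y\<in>\<Omega>. norm (x - y) \<le> D" and D0: "D > 0" and ab: "a \<le> b" and C0: "C \<ge> 0"
    and fm: "f \<in> borel_measurable (lebesgue_on \<Omega>)"
    and H: "AE x0 in lebesgue_on \<Omega>. f x0 \<le> ennreal C * (\<integral>\<^sup>+x. f x * ennreal (norm (x - x0) powr (-a)) \<partial>lebesgue_on \<Omega>)"
  shows "AE x0 in lebesgue_on \<Omega>. f x0 \<le> ennreal (C * D powr (b - a)) * (\<integral>\<^sup>+x. f x * ennreal (norm (x - x0) powr (-b)) \<partial>lebesgue_on \<Omega>)"
proof -
  let ?M = "lebesgue_on \<Omega>"
  have sp: "AE x0 in ?M. x0 \<in> \<Omega>" by (rule AE_I2) simp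
  show ?thesis using H sp
  proof eventually_elim
    case (elim x0)
    have pw: "norm (x - x0) powr (-a) \<le> D powr (b - a) * norm (x - x0) powr (-b)" if x: "x \<in> \<Omega>" for x
    proof (cases "x = x0")
      case True then show ?thesis by simp
    next
      case False
      define s where "s = norm (x - x0)"
      have s0: "s > 0" using False by (simp add: s_def)
      have sD: "s \<le> D" using diam x elim(2) by (simp add: s_def)
      have "s powr (-a) = s powr (b - a) * s powr (-b)"
        by (simp only: powr_add[symmetric]) simp
      also have "\<dots> \<le> D powr (b - a) * s powr (-b)"
        using s0 sD ab by (intro mult_right_mono powr_mono2) auto
      finally show ?thesis by (simp add: s_def)
    qed
    have "(\<integral>\<^sup>+x. f x * ennreal (norm (x - x0) powr (-a)) \<partial>?M)
        \<le> (\<integral>\<^sup>+x. ennreal (D powr (b - a)) * (f x * ennreal (norm (x - x0) powr (-b))) \<partial>?M)"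
    proof (intro nn_integral_mono_AE)
      show "AE x in ?M. f x * ennreal (norm (x - x0) powr (-a)) \<le> ennreal (D powr (b - a)) * (f x * ennreal (norm (x - x0) powr (-b)))"
      proof (rule AE_I2)
        fix x assume "x \<in> space ?M"
        then have "x \<in> \<Omega>" by simp
        then have "ennreal (norm (x - x0) powr (-a)) \<le> ennreal (D powr (b - a)) * ennreal (norm (x - x0) powr (-b))"
          using pw by (simp add: ennreal_mult'[symmetric] ennreal_leI)
        then have "f x * ennreal (norm (x - x0) powr (-a)) \<le> f x * (ennreal (D powr (b - a)) * ennreal (norm (x - x0) powr (-b)))"
          by (rule mult_left_mono) simp
        then show "f x * ennreal (norm (x - x0) powr (-a)) \<le> ennreal (D powr (b - a)) * (f x * ennreal (norm (x - x0) powr (-b)))"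
          by (simp only: mult_ac)
      qed
    qed
    also have "\<dots> = ennreal (D powr (b - a)) * (\<integral>\<^sup>+x. f x * ennreal (norm (x - x0) powr (-b)) \<partial>?M)"
      by (rule nn_integral_cmult) (intro borel_measurable_times_ennreal fm k1_leb)
    finally have "ennreal C * (\<integral>\<^sup>+x. f x * ennreal (norm (x - x0) powr (-a)) \<partial>?M)
        \<le> ennreal C * (ennreal (D powr (b - a)) * (\<integral>\<^sup>+x. f x * ennreal (norm (x - x0) powr (-b)) \<partial>?M))"
      by (rule mult_left_mono) simp
    moreover have "ennreal (C * D powr (b - a)) = ennreal C * ennreal (D powr (b - a))"
      using C0 by (simp add: ennreal_mult)
    ultimately show ?case using elim(1) by (simp only: mult.assoc)
  qed
qed

lemma iterate:
  fixes \<Omega> :: "'a::euclidean_space set" and f :: "'a \<Rightarrow> ennreal" and D a C :: real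
  assumes \<Omega>m: "\<Omega> \<in> sets lborel" and diam: "\<forall>x\<in>\<Omega>. \<forall>y\<in>\<Omega>. norm (x - y) \<le> D" and D0: "D > 0"
    and sf: "sigma_finite_measure (lebesgue_on \<Omega>)"
    and fm: "f \<in> borel_measurable (lebesgue_on \<Omega>)"
  shows "0 \<le> a \<Longrightarrow> a < real DIM('a) \<Longrightarrow> C \<ge> 0 \<Longrightarrow> real DIM('a) / 2 < 2 ^ n * (real DIM('a) - a) \<Longrightarrow>
    (AE x0 in lebesgue_on \<Omega>. f x0 \<le> ennreal C * (\<integral>\<^sup>+x. f x * ennreal (norm (x - x0) powr (-a)) \<partial>lebesgue_on \<Omega>)) \<Longrightarrow>
    (\<exists>C'\<ge>0. AE x0 in lebesgue_on \<Omega>. f x0 \<le> ennreal C' * (\<integral>\<^sup>+x. f x \<partial>lebesgue_on \<Omega>))"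
proof (induction n arbitrary: a C)
  case 0
  have a1: "2 * a < real DIM('a)" using 0(4) by simp
  show ?case by (rule step_lt[OF \<Omega>m diam D0 sf fm 0(1) a1 0(3) 0(5)])
next
  case (Suc n)
  note a0 = Suc.prems(1) and aN = Suc.prems(2) and C0 = Suc.prems(3) and cond = Suc.prems(4) and H = Suc.prems(5)
  show ?case
  proof (cases "2 * a < real DIM('a)")
    case True
    then show ?thesis by (rule step_lt[OF \<Omega>m diam D0 sf fm a0 _ C0 H])
  next
    case False
    define N where "N = real DIM('a)"
    define P where "P = (2::real) ^ Suc n"
    have P0: "P > 0" unfolding P_def by simp
    have P2: "P = 2 * 2 ^ n" unfolding P_def by simp
    define \<epsilon> where "\<epsilon> = min ((N - a) / 2) ((P * (N - a) - N / 2) / (2 * P))"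
    have cond': "N / 2 < P * (N - a)" using cond unfolding N_def P_def by simp
    have e0: "\<epsilon> > 0" unfolding \<epsilon>_def using aN cond' P0 by (auto simp: N_def)
    define b where "b = a + \<epsilon>"
    have ab: "a \<le> b" using e0 by (simp add: b_def)
    have b1: "N < 2 * b" using False e0 by (simp add: b_def N_def)
    have "\<epsilon> \<le> (N - a) / 2" unfolding \<epsilon>_def by (rule min.cobounded1)
    then have bN: "b < N" using aN unfolding b_def by (simp add: N_def)
    have "P * \<epsilon> \<le> (P * (N - a) - N / 2) / 2"
    proof -
      have "\<epsilon> \<le> (P * (N - a) - N / 2) / (2 * P)" unfolding \<epsilon>_def by (rule min.cobounded2)
      then have "P * \<epsilon> \<le> P * ((P * (N - a) - N / 2) / (2 * P))" using P0 by (intro mult_left_mono) auto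
      also have "\<dots> = (P * (N - a) - N / 2) / 2" using P0 by (simp add: field_simps)
      finally show ?thesis .
    qed
    then have condb: "N / 2 < P * (N - b)" using cond' unfolding b_def by (simp add: algebra_simps)
    have Hb: "AE x0 in lebesgue_on \<Omega>. f x0 \<le> ennreal (C * D powr (b - a)) * (\<integral>\<^sup>+x. f x * ennreal (norm (x - x0) powr (-b)) \<partial>lebesgue_on \<Omega>)"
      by (rule bump[OF diam D0 ab C0 fm H])
    have Cb: "C * D powr (b - a) \<ge> 0" using C0 by simp
    obtain C' where C'0: "C' \<ge> 0" and H': "AE x0 in lebesgue_on \<Omega>. f x0 \<le> ennreal C' * (\<integral>\<^sup>+x. f x * ennreal (norm (x - x0) powr (-(2 * b - real DIM('a)))) \<partial>lebesgue_on \<Omega>)"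
      using step_gt[OF \<Omega>m diam sf fm _ _ Cb Hb] b1 bN unfolding N_def by blast
    have c1: "0 \<le> 2 * b - real DIM('a)" using b1 by (simp add: N_def)
    have c2: "2 * b - real DIM('a) < real DIM('a)" using bN by (simp add: N_def)
    have c3: "real DIM('a) / 2 < 2 ^ n * (real DIM('a) - (2 * b - real DIM('a)))"
      using condb unfolding P2 N_def by (simp add: algebra_simps)
    show ?thesis by (rule Suc.IH[OF c1 c2 C'0 c3 H'])
  qed
qed

lemma AE_lborel_to_on:
  fixes \<Omega> :: "'a::euclidean_space set"
  assumes "\<Omega> \<in> sets lborel" "AE x in lborel. P x"
  shows "AE x in lebesgue_on \<Omega>. P x"
proof -
  have "AE x in lebesgue. P x" by (rule AE_completion[OF assms(2)])
  then show ?thesis using assms(1) by (subst AE_restrict_space_iff) (auto elim: eventually_mono)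
qed

lemma AE_prod_sections:
  fixes \<Omega> :: "'a::euclidean_space set" and Q :: "'a \<Rightarrow> 'a \<Rightarrow> bool"
  assumes \<Omega>o: "open \<Omega>"
    and H: "AE p in lebesgue_on (\<Omega> \<times> \<Omega>). Q (fst p) (snd p)"
  shows "AE x0 in lebesgue_on \<Omega>. AE x in lebesgue_on \<Omega>. Q x x0"
proof -
  have \<Omega>b: "\<Omega> \<in> sets lborel" using \<Omega>o by simp
  have oo: "open (\<Omega> \<times> \<Omega>)" using \<Omega>o by (simp add: open_Times)
  have "AE p in lebesgue. p \<in> \<Omega> \<times> \<Omega> \<longrightarrow> Q (fst p) (snd p)"
    using H oo by (subst (asm) AE_restrict_space_iff) auto
  then have "AE p in lborel. p \<in> \<Omega> \<times> \<Omega> \<longrightarrow> Q (fst p) (snd p)"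
    by (simp add: AE_completion_iff)
  then have "AE p in (lborel \<Otimes>\<^sub>M lborel). p \<in> \<Omega> \<times> \<Omega> \<longrightarrow> Q (fst p) (snd p)"
    by (simp only: lborel_prod)
  then have "AE p in distr (lborel \<Otimes>\<^sub>M lborel) (lborel \<Otimes>\<^sub>M lborel) (\<lambda>(x, y). (y, x)). p \<in> \<Omega> \<times> \<Omega> \<longrightarrow> Q (fst p) (snd p)"
  proof -
    have eq: "distr (lborel \<Otimes>\<^sub>M lborel) (lborel \<Otimes>\<^sub>M lborel) (\<lambda>(x, y). (y, x)) = (lborel \<Otimes>\<^sub>M lborel :: ('a \<times> 'a) measure)"
      by (rule lborel_pair.distr_pair_swap[symmetric])
    show ?thesis using \<open>AE p in (lborel \<Otimes>\<^sub>M lborel). p \<in> \<Omega> \<times> \<Omega> \<longrightarrow> Q (fst p) (snd p)\<close> by (simp only: eq)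
  qed
  then have "AE q in (lborel \<Otimes>\<^sub>M lborel). (case q of (x, y) \<Rightarrow> (y, x)) \<in> \<Omega> \<times> \<Omega> \<longrightarrow> Q (fst (case q of (x, y) \<Rightarrow> (y, x))) (snd (case q of (x, y) \<Rightarrow> (y, x)))"
    by (rule AE_distrD[OF measurable_pair_swap'])
  then have "AE x0 in lborel. AE x in lborel. (x, x0) \<in> \<Omega> \<times> \<Omega> \<longrightarrow> Q x x0"
    by (rule lborel_pair.AE_pair[THEN eventually_mono]) simp
  then have "AE x0 in lebesgue_on \<Omega>. AE x in lborel. (x, x0) \<in> \<Omega> \<times> \<Omega> \<longrightarrow> Q x x0"
    by (rule AE_lborel_to_on[OF \<Omega>b])
  moreover have "AE x0 in lebesgue_on \<Omega>. x0 \<in> \<Omega>" by (rule AE_I2) simp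
  ultimately show ?thesis
  proof eventually_elim
    case (elim x0)
    have "AE x in lebesgue_on \<Omega>. (x, x0) \<in> \<Omega> \<times> \<Omega> \<longrightarrow> Q x x0"
      by (rule AE_lborel_to_on[OF \<Omega>b elim(1)])
    moreover have "AE x in lebesgue_on \<Omega>. x \<in> \<Omega>" by (rule AE_I2) simp
    ultimately show ?case by eventually_elim (use elim(2) in auto)
  qed
qed

theorem lemma5p2:
  fixes \<Omega> :: "'a::euclidean_space set"
    and D :: "('a \<Rightarrow> real) set"
    and L :: "('a \<Rightarrow> real) \<Rightarrow> ('a \<Rightarrow> real)"
    and G :: "'a \<Rightarrow> 'a \<Rightarrow> real"
    and u :: "'a \<Rightarrow> real"
    and \<kappa>0 :: real
  assumes "DIM('a) \<ge> 2"
    and "bounded_C11_domain \<Omega>"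
    and "l1_linear_operator \<Omega> D L"
    and "densely_defined \<Omega> D"
    and A1: "m_accretive_L1 \<Omega> D L"
    and A2: "submarkovian \<Omega> D L"
    and "green_left_inverse \<Omega> D L G"
    and K1: "\<exists>s c1. 0 < s \<and> s \<le> 1 \<and> 0 < c1 \<and> K1 \<Omega> G s c1"
    and "\<kappa>0 > 0"
    and "u \<in> borel_measurable (lebesgue_on \<Omega>)"
    and "integrable (lebesgue_on \<Omega>) (\<lambda>x. (u x)\<^sup>2)"
    and "AE x in lebesgue_on \<Omega>. 0 \<le> u x"
    and "AE x0 in lebesgue_on \<Omega>.
           ennreal (u x0) \<le> ennreal \<kappa>0 * (\<integral>\<^sup>+ x. ennreal (u x * G x x0) \<partial>lebesgue_on \<Omega>)"
  shows "\<exists>\<kappa>>0. AE x in lebesgue_on \<Omega>. \<bar>u x\<bar> \<le> \<kappa> * (\<integral>x. \<bar>u x\<bar> \<partial>lebesgue_on \<Omega>)"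
proof -
  let ?M = "lebesgue_on \<Omega>"
  define N where "N = real DIM('a)"
  have dom: "open \<Omega>" "bounded \<Omega>" using assms(2) by (auto simp: bounded_C11_domain_def)
  have \<Omega>b: "\<Omega> \<in> sets lborel" using dom by simp
  have \<Omega>l: "\<Omega> \<in> sets lebesgue" using \<Omega>b by simp
  have fin: "finite_measure ?M"
    by (rule finite_measure_lebesgue_on[OF bounded_set_imp_lmeasurable[OF dom(2) \<Omega>l]])
  have sf: "sigma_finite_measure ?M" using fin by (simp add: finite_measure_def)
  obtain B where B: "\<And>x. x \<in> \<Omega> \<Longrightarrow> norm x \<le> B" using dom(2) by (auto simp: bounded_iff)
  define DD where "DD = 2 * \<bar>B\<bar> + 1"
  have DD0: "DD > 0" unfolding DD_def by simp
  have diam: "\<forall>x\<in>\<Omega>. \<forall>y\<in>\<Omega>. norm (x - y) \<le> DD"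
  proof (intro ballI)
    fix x y assume "x \<in> \<Omega>" "y \<in> \<Omega>"
    then have "norm x \<le> B" "norm y \<le> B" using B by auto
    then show "norm (x - y) \<le> DD" unfolding DD_def using norm_triangle_ineq4[of x y] by linarith
  qed
  define f where "f x = ennreal (u x)" for x
  have fm: "f \<in> borel_measurable ?M"
    unfolding f_def by (rule measurable_compose[OF assms(10) measurable_ennreal])
  obtain s c1 where s0: "0 < s" and s1: "s \<le> 1" and c10: "0 < c1" and K1': "K1 \<Omega> G s c1"
    using K1 by blast
  define \<alpha> where "\<alpha> = N - 2 * s"
  have \<alpha>0: "0 \<le> \<alpha>" using assms(1) s1 unfolding \<alpha>_def N_def by simp
  have \<alpha>N: "\<alpha> < N" using s0 unfolding \<alpha>_def by simp
  have Gb: "AE x0 in ?M. AE x in ?M. G x x0 \<le> c1 * norm (x - x0) powr (-\<alpha>)"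
  proof -
    have "AE p in lebesgue_on (\<Omega> \<times> \<Omega>). G (fst p) (snd p) \<le> c1 * norm (fst p - snd p) powr (-\<alpha>)"
      using K1' unfolding K1_def \<alpha>_def N_def by (auto simp: dist_norm elim!: eventually_mono)
    then show ?thesis by (rule AE_prod_sections[OF dom(1), where Q = "\<lambda>x x0. G x x0 \<le> c1 * norm (x - x0) powr (-\<alpha>)"])
  qed
  have H0: "AE x0 in ?M. f x0 \<le> ennreal (\<kappa>0 * c1) * (\<integral>\<^sup>+x. f x * ennreal (norm (x - x0) powr (-\<alpha>)) \<partial>?M)"
    using assms(13) Gb
  proof eventually_elim
    case (elim x0)
    have "(\<integral>\<^sup>+ x. ennreal (u x * G x x0) \<partial>?M) \<le> (\<integral>\<^sup>+ x. ennreal c1 * (f x * ennreal (norm (x - x0) powr (-\<alpha>))) \<partial>?M)"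
    proof (intro nn_integral_mono_AE)
      show "AE x in ?M. ennreal (u x * G x x0) \<le> ennreal c1 * (f x * ennreal (norm (x - x0) powr (-\<alpha>)))"
        using elim(2) assms(12)
      proof eventually_elim
        case (elim x)
        have "u x * G x x0 \<le> u x * (c1 * norm (x - x0) powr (-\<alpha>))"
          using elim by (intro mult_left_mono) auto
        then have "ennreal (u x * G x x0) \<le> ennreal (u x * (c1 * norm (x - x0) powr (-\<alpha>)))"
          by (rule ennreal_leI)
        also have "\<dots> = ennreal c1 * (f x * ennreal (norm (x - x0) powr (-\<alpha>)))"
          using elim(2) c10 unfolding f_def by (simp add: ennreal_mult' mult_ac)
        finally show ?case .
      qed
    qed
    also have "\<dots> = ennreal c1 * (\<integral>\<^sup>+x. f x * ennreal (norm (x - x0) powr (-\<alpha>)) \<partial>?M)"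
      by (rule nn_integral_cmult) (intro borel_measurable_times_ennreal fm k1_leb)
    finally have "ennreal \<kappa>0 * (\<integral>\<^sup>+ x. ennreal (u x * G x x0) \<partial>?M)
        \<le> ennreal \<kappa>0 * (ennreal c1 * (\<integral>\<^sup>+x. f x * ennreal (norm (x - x0) powr (-\<alpha>)) \<partial>?M))"
      by (rule mult_left_mono) simp
    moreover have "ennreal (\<kappa>0 * c1) = ennreal \<kappa>0 * ennreal c1"
      using assms(9) c10 by (simp add: ennreal_mult)
    ultimately show ?case using elim(1) unfolding f_def by (simp only: mult.assoc) 
  qed
  obtain n :: nat where n: "N / (4 * s) < 2 ^ n" using real_arch_pow[of 2 "N / (4 * s)"] by auto
  have condn: "real DIM('a) / 2 < 2 ^ n * (real DIM('a) - \<alpha>)"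
  proof -
    have "N / 2 = (N / (4 * s)) * (2 * s)" using s0 by (simp add: field_simps)
    also have "\<dots> < 2 ^ n * (2 * s)" using n s0 by (intro mult_strict_right_mono) auto
    finally show ?thesis unfolding \<alpha>_def N_def by simp
  qed
  have kc: "\<kappa>0 * c1 \<ge> 0" using assms(9) c10 by simp
  obtain C' where C'0: "C' \<ge> 0" and HC: "AE x0 in ?M. f x0 \<le> ennreal C' * (\<integral>\<^sup>+x. f x \<partial>?M)"
    using iterate[OF \<Omega>b diam DD0 sf fm \<alpha>0 _ kc condn H0] \<alpha>N unfolding N_def by blast
  have iu: "integrable ?M u"
  proof (rule Bochner_Integration.integrable_bound)
    show "integrable ?M (\<lambda>x. 1 + (u x)\<^sup>2)"
      using assms(11) fin by (intro Bochner_Integration.integrable_add finite_measure.integrable_const) auto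
    show "u \<in> borel_measurable ?M" by (rule assms(10))
    show "AE x in ?M. norm (u x) \<le> norm (1 + (u x)\<^sup>2)"
    proof (rule AE_I2)
      fix x
      have "\<bar>u x\<bar> \<le> 1 + (u x)\<^sup>2"
      proof (cases "\<bar>u x\<bar> \<le> 1")
        case True then show ?thesis by (simp add: add_increasing2)
      next
        case False
        then have "\<bar>u x\<bar> \<le> \<bar>u x\<bar> * \<bar>u x\<bar>" by (intro mult_le_cancel_left1[THEN iffD2]) auto
        then show ?thesis by (simp add: power2_eq_square abs_mult_self_eq)
      qed
      then show "norm (u x) \<le> norm (1 + (u x)\<^sup>2)" by simp
    qed
  qed
  have intf: "(\<integral>\<^sup>+x. f x \<partial>?M) = ennreal (\<integral>x. \<bar>u x\<bar> \<partial>?M)"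
  proof -
    have "(\<integral>\<^sup>+x. f x \<partial>?M) = (\<integral>\<^sup>+x. ennreal \<bar>u x\<bar> \<partial>?M)"
      unfolding f_def using assms(12) by (intro nn_integral_cong_AE) (auto elim!: eventually_mono)
    also have "\<dots> = ennreal (\<integral>x. \<bar>u x\<bar> \<partial>?M)"
      using iu by (intro nn_integral_eq_integral) auto
    finally show ?thesis .
  qed
  have I0: "(\<integral>x. \<bar>u x\<bar> \<partial>?M) \<ge> 0" by simp
  show ?thesis
  proof (intro exI[of _ "C' + 1"] conjI)
    show "C' + 1 > 0" using C'0 by simp
    show "AE x in ?M. \<bar>u x\<bar> \<le> (C' + 1) * (\<integral>x. \<bar>u x\<bar> \<partial>?M)"
      using HC assms(12)
    proof eventually_elim
      case (elim x)
      have "ennreal (u x) \<le> ennreal (C' * (\<integral>x. \<bar>u x\<bar> \<partial>?M))"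
      proof -
        have "f x \<le> ennreal C' * ennreal (\<integral>x. \<bar>u x\<bar> \<partial>?M)" using elim(1) by (simp only: intf)
        then show ?thesis using C'0 I0 unfolding f_def by (simp add: ennreal_mult)
      qed
      then have "u x \<le> C' * (\<integral>x. \<bar>u x\<bar> \<partial>?M)"
        using C'0 I0 by (simp add: ennreal_le_iff)
      also have "\<dots> \<le> (C' + 1) * (\<integral>x. \<bar>u x\<bar> \<partial>?M)" using I0 by (simp add: mult_right_mono)
      finally show ?case using elim(2) by simp
    qed
  qed
qed


end
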